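(* In the dynamic oligopoly model of the context, suppose that $c$ is continuous, increasing and convex on $A$ and that $u(x,m)$ is discretely convex and strictly increasing in $x$ and continuous in $m$. Then for every $x\in X$ and $m$, the function $a\mapsto H(x,a;m,V)=u(x,m)-c(a)+\beta\sum_{y}W(x,a,y)V(y,m)$ is strictly concave on $A$; hence the optimal policy correspondence $G(x,m)=\arg\max_{a\in A}H(x,a;m,V)$ is single-valued and there is a unique optimal policy $g$.
   Context: Dynamic oligopoly model. States $X=\{0,1,2,\dots\}$; actions $A=[\underline a,1]$, $0<\underline a<1$. For $x\ge1$: $W(x,a,x+1)=\frac{(1-\delta)a}{1+a}$, $W(x,a,x)=\frac{1-\delta+\delta a}{1+a}$, $W(x,a,x-1)=\frac{\delta}{1+a}$, otherwise $0$; $W(0,a,1)=\frac{(1-\delta)a}{1+a}$, $W(0,a,0)=1-W(0,a,1)$; $\delta\in(0,1)$. Payoff $u(x,m)-c(a)$, discount $\beta\in(0,1)$. For fixed $m$, the value function $V(x,m)$ is assumed finite, satisfies $V(x,m)=\max_{a\in A}\{u(x,m)-c(a)+\beta\sum_y W(x,a,y)V(y,m)\}$, and is the pointwise limit of $T^nf$ for any $f$ (in particular $f\equiv0$), where $Tf(x,m)=\max_{a\in A}\{u(x,m)-c(a)+\beta\sum_yW(x,a,y)f(y,m)\}$. A function $h:X\to\mathbb{R}$ is discretely convex if $h(x+2)-2h(x+1)+h(x)\ge0$ for all $x\ge0$. *)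

theory Defs
  imports "HOL-Analysis.Analysis"
begin

definition Aset :: "real \<Rightarrow> real set" where
  "Aset alo = {alo..1}"

definition W :: "real \<Rightarrow> nat \<Rightarrow> real \<Rightarrow> nat \<Rightarrow> real" where
  "W \<delta> x a y =
     (if x = 0 then
        (if y = 1 then (1 - \<delta>) * a / (1 + a)
         else if y = 0 then 1 - (1 - \<delta>) * a / (1 + a) else 0)
      else
        (if y = x + 1 then (1 - \<delta>) * a / (1 + a)
         else if y = x then (1 - \<delta> + \<delta> * a) / (1 + a)
         else if y = x - 1 then \<delta> / (1 + a) else 0))"

text \<open>Expected continuation value sum_y W(x,a,y) f(y,m); W(x,a,y) = 0 unless y \<le> x+1.\<close>
definition EV :: "real \<Rightarrow> nat \<Rightarrow> real \<Rightarrow> (nat \<Rightarrow> 'm \<Rightarrow> real) \<Rightarrow> 'm \<Rightarrow> real" where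
  "EV \<delta> x a f m = (\<Sum>y\<le>Suc x. W \<delta> x a y * f y m)"

definition H :: "(nat \<Rightarrow> 'm \<Rightarrow> real) \<Rightarrow> (real \<Rightarrow> real) \<Rightarrow> real \<Rightarrow> real
                  \<Rightarrow> nat \<Rightarrow> real \<Rightarrow> 'm \<Rightarrow> (nat \<Rightarrow> 'm \<Rightarrow> real) \<Rightarrow> real" where
  "H u c \<beta> \<delta> x a m f = u x m - c a + \<beta> * EV \<delta> x a f m"

text \<open>Bellman operator T (the max over the compact set A is written as a supremum).\<close>
definition Top :: "(nat \<Rightarrow> 'm \<Rightarrow> real) \<Rightarrow> (real \<Rightarrow> real) \<Rightarrow> real \<Rightarrow> real \<Rightarrow> real
                   \<Rightarrow> (nat \<Rightarrow> 'm \<Rightarrow> real) \<Rightarrow> (nat \<Rightarrow> 'm \<Rightarrow> real)" where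
  "Top u c \<beta> \<delta> alo f = (\<lambda>x m. SUP a\<in>Aset alo. H u c \<beta> \<delta> x a m f)"

definition discretely_convex :: "(nat \<Rightarrow> real) \<Rightarrow> bool" where
  "discretely_convex h \<longleftrightarrow> (\<forall>x. h (x + 2) - 2 * h (x + 1) + h x \<ge> 0)"

definition strictly_concave_on :: "real set \<Rightarrow> (real \<Rightarrow> real) \<Rightarrow> bool" where
  "strictly_concave_on S f \<longleftrightarrow> convex S \<and>
     (\<forall>x\<in>S. \<forall>y\<in>S. x \<noteq> y \<longrightarrow> (\<forall>t. 0 < t \<and> t < 1 \<longrightarrow>
        f ((1 - t) * x + t * y) > (1 - t) * f x + t * f y))"

definition Gcorr :: "(nat \<Rightarrow> 'm \<Rightarrow> real) \<Rightarrow> (real \<Rightarrow> real) \<Rightarrow> real \<Rightarrow> real \<Rightarrow> real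
                     \<Rightarrow> (nat \<Rightarrow> 'm \<Rightarrow> real) \<Rightarrow> nat \<Rightarrow> 'm \<Rightarrow> real set" where
  "Gcorr u c \<beta> \<delta> alo V x m =
     {a \<in> Aset alo. \<forall>b\<in>Aset alo. H u c \<beta> \<delta> x b m V \<le> H u c \<beta> \<delta> x a m V}"

end

theory Submission imports Defs begin

lemma EV_Suc:
  assumes "1 + a \<noteq> 0"
  shows "EV \<delta> (Suc k) a f m = ((1-\<delta>)*a*f (Suc(Suc k)) m + (1-\<delta>+\<delta>*a)*f (Suc k) m + \<delta>*f k m)/(1+a)"
proof -
  have z: "(\<Sum>y<k. W \<delta> (Suc k) a y * f y m) = 0"
    by (rule sum.neutral) (auto simp: W_def)
  have "EV \<delta> (Suc k) a f m = (\<Sum>y<k. W \<delta> (Suc k) a y * f y m) + W \<delta> (Suc k) a k * f k m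
     + W \<delta> (Suc k) a (Suc k) * f (Suc k) m + W \<delta> (Suc k) a (Suc (Suc k)) * f (Suc (Suc k)) m"
    unfolding EV_def by (simp add: lessThan_Suc_atMost[symmetric])
  also have "\<dots> = \<delta>/(1+a) * f k m + (1-\<delta>+\<delta>*a)/(1+a) * f (Suc k) m + (1-\<delta>)*a/(1+a) * f (Suc(Suc k)) m"
  proof -
    have "W \<delta> (Suc k) a k = \<delta>/(1+a)" "W \<delta> (Suc k) a (Suc k) = (1-\<delta>+\<delta>*a)/(1+a)"
         "W \<delta> (Suc k) a (Suc (Suc k)) = (1-\<delta>)*a/(1+a)" by (simp_all add: W_def)
    then show ?thesis using z by simp
  qed
  finally show ?thesis using assms by (simp add: add_divide_distrib diff_divide_distrib distrib_right left_diff_distrib)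
qed

lemma EV_0:
  shows "EV \<delta> 0 a f m = (1-\<delta>)*a/(1+a) * f 1 m + (1 - (1-\<delta>)*a/(1+a)) * f 0 m"
  unfolding EV_def by (simp add: W_def)

lemma inv_strict:
  fixes p q t :: real
  assumes "p > 0" "q > 0" "p \<noteq> q" "0 < t" "t < 1"
  shows "1/((1-t)*p+t*q) < (1-t)/p + t/q"
proof -
  have s: "(1-t)*p+t*q > 0" using assms by (simp add: add_pos_pos)
  have "((1-t)*q + t*p) * ((1-t)*p+t*q) = p*q + t*(1-t)*(p-q)^2" by (simp add: algebra_simps power2_eq_square)
  moreover have "t*(1-t)*(p-q)^2 > 0" using assms by simp
  ultimately have "p*q < ((1-t)*q + t*p) * ((1-t)*p+t*q)" by linarith
  then show ?thesis using assms s by (simp add: field_simps)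
qed

lemma EV_0':
  assumes ne: "1 + a \<noteq> 0"
  shows "EV \<delta> 0 a f m = ((1-\<delta>)*a*f 1 m + (1+\<delta>*a)*f 0 m)/(1+a)"
proof -
  have "1 - (1-\<delta>)*a/(1+a) = (1+\<delta>*a)/(1+a)" using ne by (simp add: field_simps)
  then show ?thesis unfolding EV_0 by (simp add: add_divide_distrib distrib_right)
qed

lemma W_cont: "\<forall>a\<in>S. 1 + a \<noteq> 0 \<Longrightarrow> continuous_on S (\<lambda>a. W \<delta> x a y)"
  unfolding W_def by (cases "x = 0"; cases "y = x+1"; cases "y = x"; cases "y = x - 1"; cases "y=1"; cases "y=0";
      auto intro!: continuous_intros)

lemma EV_cont: "\<forall>a\<in>S. 1 + a \<noteq> 0 \<Longrightarrow> continuous_on S (\<lambda>a. EV \<delta> x a f m)"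
  unfolding EV_def by (intro continuous_on_sum continuous_on_mult_right W_cont) 

lemma H_bdd:
  assumes "0 < alo" "continuous_on (Aset alo) c"
  shows "bdd_above ((\<lambda>a. H u c \<beta> \<delta> x a m f) ` Aset alo)"
proof -
  have "continuous_on (Aset alo) (\<lambda>a. H u c \<beta> \<delta> x a m f)"
    unfolding H_def using assms
    by (intro continuous_intros EV_cont) (auto simp: Aset_def)
  moreover have "compact (Aset alo)" by (simp add: Aset_def)
  ultimately show ?thesis
    by (intro bounded_imp_bdd_above compact_imp_bounded compact_continuous_image)
qed

lemma EV_mono_x:
  assumes f: "\<And>y. f y m \<le> f (Suc y) m" and a: "0 \<le> a" and d: "0 \<le> \<delta>" "\<delta> \<le> 1"
  shows "EV \<delta> x a f m \<le> EV \<delta> (Suc x) a f m"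
proof (cases x)
  case 0
  have "EV \<delta> (Suc 0) a f m - EV \<delta> 0 a f m
     = ((1-\<delta>)*a*(f 2 m - f 1 m) + (1-\<delta>+\<delta>*a)*(f 1 m - f 0 m))/(1+a)"
  proof -
    have "1 + a \<noteq> 0" using a by simp
    have e0: "EV \<delta> 0 a f m = ((1-\<delta>)*a*f 1 m + (1+\<delta>*a)*f 0 m)/(1+a)"
    proof -
      have "1 - (1-\<delta>)*a/(1+a) = (1+\<delta>*a)/(1+a)" using \<open>1+a\<noteq>0\<close> by (simp add: field_simps)
      then show ?thesis unfolding EV_0 by (simp add: add_divide_distrib distrib_right)
    qed
    show ?thesis unfolding e0 EV_Suc[OF \<open>1+a\<noteq>0\<close>] diff_divide_distrib[symmetric]
      by (rule arg_cong[where f="\<lambda>t. t/(1+a)"]) (simp add: numeral_2_eq_2 algebra_simps)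
  qed
  also have "\<dots> \<ge> 0" using f[of 0] f[of 1] a d
    by (intro divide_nonneg_pos add_nonneg_nonneg mult_nonneg_nonneg) (auto simp: numeral_2_eq_2)
  finally show ?thesis using 0 by simp
next
  case (Suc k)
  have "EV \<delta> (Suc (Suc k)) a f m - EV \<delta> (Suc k) a f m
     = ((1-\<delta>)*a*(f (Suc(Suc(Suc k))) m - f (Suc (Suc k)) m) + (1-\<delta>+\<delta>*a)*(f (Suc (Suc k)) m - f (Suc k) m)
        + \<delta> * (f (Suc k) m - f k m))/(1+a)"
  proof -
    have ne: "1 + a \<noteq> 0" using a by simp
    show ?thesis unfolding EV_Suc[OF ne] diff_divide_distrib[symmetric]
      by (rule arg_cong[where f="\<lambda>t. t/(1+a)"]) (simp add: algebra_simps)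
  qed
  also have "\<dots> \<ge> 0" using f[of k] f[of "Suc k"] f[of "Suc (Suc k)"] a d
    by (intro divide_nonneg_pos add_nonneg_nonneg mult_nonneg_nonneg) auto
  finally show ?thesis using Suc by simp
qed

lemma Top_mono:
  assumes alo: "0 < alo" "alo \<le> 1" and cc: "continuous_on (Aset alo) c"
    and f: "\<And>y m. f y m \<le> f (Suc y) m" and um: "\<And>y m. u y m \<le> u (Suc y) m"
    and d: "0 \<le> \<delta>" "\<delta> \<le> 1" and b: "0 \<le> \<beta>"
  shows "Top u c \<beta> \<delta> alo f x m \<le> Top u c \<beta> \<delta> alo f (Suc x) m"
  unfolding Top_def
proof (rule cSUP_least)
  show "Aset alo \<noteq> {}" using alo by (auto simp: Aset_def)
next
  fix a assume a: "a \<in> Aset alo"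
  have "H u c \<beta> \<delta> x a m f \<le> H u c \<beta> \<delta> (Suc x) a m f"
    unfolding H_def using EV_mono_x[of f m a \<delta> x, OF f] a alo d b um[of x m]
    by (auto simp: Aset_def intro!: add_mono mult_left_mono)
  also have "\<dots> \<le> (SUP a\<in>Aset alo. H u c \<beta> \<delta> (Suc x) a m f)"
    by (rule cSUP_upper[OF a H_bdd[OF alo(1) cc]])
  finally show "H u c \<beta> \<delta> x a m f \<le> (SUP a\<in>Aset alo. H u c \<beta> \<delta> (Suc x) a m f)" .
qed

lemma EV_repr:
  assumes f: "\<And>y. f y m < f (Suc y) m" and d: "0 < \<delta>" "\<delta> < 1"
  shows "\<exists>\<alpha> K. K > 0 \<and> (\<forall>a. a \<ge> 0 \<longrightarrow> EV \<delta> x a f m = \<alpha> - K/(1+a))"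
proof (cases x)
  case 0
  define D where "D = f 1 m - f 0 m"
  have D: "D > 0" using f[of 0] by (simp add: D_def)
  show ?thesis
  proof (intro exI conjI allI impI)
    show "(1-\<delta>)*D > 0" using D d by simp
    fix a :: real assume a: "a \<ge> 0"
    have ne: "1 + a \<noteq> 0" using a by simp
    show "EV \<delta> x a f m = (f 0 m + (1-\<delta>)*D) - (1-\<delta>)*D/(1+a)"
      unfolding 0 EV_0'[OF ne] D_def using ne by (simp add: field_simps)
  qed
next
  case (Suc k)
  define D1 where "D1 = f (Suc (Suc k)) m - f (Suc k) m"
  define D0 where "D0 = f (Suc k) m - f k m"
  have D: "D1 > 0" "D0 > 0" using f[of k] f[of "Suc k"] by (simp_all add: D1_def D0_def)
  show ?thesis
  proof (intro exI conjI allI impI)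
    show "(1-\<delta>)*D1 + \<delta>*D0 > 0" using D d by (simp add: add_pos_pos)
    fix a :: real assume a: "a \<ge> 0"
    have ne: "1 + a \<noteq> 0" using a by simp
    show "EV \<delta> x a f m = (f (Suc k) m + (1-\<delta>)*D1) - ((1-\<delta>)*D1 + \<delta>*D0)/(1+a)"
      unfolding Suc EV_Suc[OF ne] D1_def D0_def using ne by (simp add: field_simps)
  qed
qed

lemma EV_sconc:
  assumes f: "\<And>y. f y m < f (Suc y) m" and d: "0 < \<delta>" "\<delta> < 1"
    and a: "a1 \<ge> 0" "a2 \<ge> 0" "a1 \<noteq> a2" and t: "0 < t" "t < 1"
  shows "EV \<delta> x ((1-t)*a1 + t*a2) f m > (1-t) * EV \<delta> x a1 f m + t * EV \<delta> x a2 f m"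
proof -
  obtain \<alpha> K where K: "K > 0" and e: "\<And>a. a \<ge> 0 \<Longrightarrow> EV \<delta> x a f m = \<alpha> - K/(1+a)"
    using EV_repr[of f m \<delta> x, OF f d] by blast
  have s: "(1-t)*a1 + t*a2 \<ge> 0" using a t by simp
  have eq: "1 + ((1-t)*a1 + t*a2) = (1-t)*(1+a1) + t*(1+a2)" by (simp add: algebra_simps)
  have "1/((1-t)*(1+a1) + t*(1+a2)) < (1-t)/(1+a1) + t/(1+a2)"
    by (rule inv_strict) (use a t in auto)
  hence "K * (1/((1-t)*(1+a1) + t*(1+a2))) < K * ((1-t)/(1+a1) + t/(1+a2))"
    using K by (intro mult_strict_left_mono) auto
  thus ?thesis unfolding e[OF s] e[OF a(1)] e[OF a(2)] eq by (simp add: algebra_simps)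
qed

theorem mainTheorem7:
  fixes u :: "nat \<Rightarrow> 'm::topological_space \<Rightarrow> real"
    and c :: "real \<Rightarrow> real"
    and V :: "nat \<Rightarrow> 'm \<Rightarrow> real"
    and \<beta> \<delta> alo :: real
  assumes alo: "0 < alo" "alo < 1"
    and delta: "0 < \<delta>" "\<delta> < 1"
    and beta: "0 < \<beta>" "\<beta> < 1"
    and c_cont: "continuous_on (Aset alo) c"
    and c_incr: "mono_on (Aset alo) c"
    and c_conv: "convex_on (Aset alo) c"
    and u_dconv: "\<And>m. discretely_convex (\<lambda>x. u x m)"
    and u_smono: "\<And>m. strict_mono (\<lambda>x. u x m)"
    and u_cont: "\<And>x. continuous_on UNIV (\<lambda>m. u x m)"
    and V_bellman: "\<And>x m. (\<exists>a\<in>Aset alo. V x m = H u c \<beta> \<delta> x a m V)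
                         \<and> (\<forall>a\<in>Aset alo. H u c \<beta> \<delta> x a m V \<le> V x m)"
    and V_limit: "\<And>x m. (\<lambda>n. ((Top u c \<beta> \<delta> alo ^^ n) (\<lambda>_ _. 0)) x m) \<longlonglongrightarrow> V x m"
  shows "(\<forall>x m. strictly_concave_on (Aset alo) (\<lambda>a. H u c \<beta> \<delta> x a m V))
       \<and> (\<forall>x m. \<exists>a. Gcorr u c \<beta> \<delta> alo V x m = {a})
       \<and> (\<exists>!g. \<forall>x m. g x m \<in> Gcorr u c \<beta> \<delta> alo V x m)"
proof -
  have us: "u y m < u (Suc y) m" for y m using u_smono[of m] by (simp add: strict_mono_def)
  have um: "u y m \<le> u (Suc y) m" for y m using us[of y m] by simp
  have mon: "\<forall>x m. (Top u c \<beta> \<delta> alo ^^ n) (\<lambda>_ _. 0) x m \<le> (Top u c \<beta> \<delta> alo ^^ n) (\<lambda>_ _. 0) (Suc x) m" for n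
  proof (induction n)
    case 0 then show ?case by simp
  next
    case (Suc n)
    show ?case
    proof (intro allI)
      fix x m
      have "Top u c \<beta> \<delta> alo ((Top u c \<beta> \<delta> alo ^^ n) (\<lambda>_ _. 0)) x m
          \<le> Top u c \<beta> \<delta> alo ((Top u c \<beta> \<delta> alo ^^ n) (\<lambda>_ _. 0)) (Suc x) m"
        by (rule Top_mono[where u=u]) (use Suc alo delta beta c_cont um in auto)
      then show "(Top u c \<beta> \<delta> alo ^^ Suc n) (\<lambda>_ _. 0) x m \<le> (Top u c \<beta> \<delta> alo ^^ Suc n) (\<lambda>_ _. 0) (Suc x) m"
        by simp
    qed
  qed
  have Vm: "V y m \<le> V (Suc y) m" for y m
    by (rule LIMSEQ_le[OF V_limit V_limit]) (use mon in auto)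
  have Vs: "V y m < V (Suc y) m" for y m
  proof -
    obtain a where a: "a \<in> Aset alo" and e: "V y m = H u c \<beta> \<delta> y a m V" using V_bellman by blast
    have "EV \<delta> y a V m \<le> EV \<delta> (Suc y) a V m"
      by (rule EV_mono_x[of V m, OF Vm]) (use a alo delta in \<open>auto simp: Aset_def\<close>)
    hence "H u c \<beta> \<delta> y a m V < H u c \<beta> \<delta> (Suc y) a m V"
      unfolding H_def using us[of y m] beta by (intro add_less_le_mono) (auto intro: mult_left_mono)
    also have "\<dots> \<le> V (Suc y) m" using V_bellman a by blast
    finally show ?thesis using e by simp
  qed
  have conc: "strictly_concave_on (Aset alo) (\<lambda>a. H u c \<beta> \<delta> x a m V)" for x m
    unfolding strictly_concave_on_def
  proof (intro conjI ballI impI allI)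
    show "convex (Aset alo)" by (simp add: Aset_def)
    fix a1 a2 t assume a1: "a1 \<in> Aset alo" and a2: "a2 \<in> Aset alo" and ne: "a1 \<noteq> a2" and t: "0 < (t::real) \<and> t < 1"
    have ev: "EV \<delta> x ((1-t)*a1 + t*a2) V m > (1-t) * EV \<delta> x a1 V m + t * EV \<delta> x a2 V m"
      by (rule EV_sconc[of V m, OF Vs delta]) (use a1 a2 ne t alo in \<open>auto simp: Aset_def\<close>)
    have cc: "c ((1-t)*a1 + t*a2) \<le> (1-t) * c a1 + t * c a2"
      using convex_onD[OF c_conv, of t a1 a2] t a1 a2 by simp
    have "\<beta> * ((1-t) * EV \<delta> x a1 V m + t * EV \<delta> x a2 V m) < \<beta> * EV \<delta> x ((1-t)*a1 + t*a2) V m"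
      using ev beta by simp
    then show "H u c \<beta> \<delta> x ((1-t)*a1 + t*a2) m V > (1-t) * H u c \<beta> \<delta> x a1 m V + t * H u c \<beta> \<delta> x a2 m V"
      unfolding H_def using cc by (simp add: algebra_simps)
  qed
  have single: "\<exists>a. Gcorr u c \<beta> \<delta> alo V x m = {a}" for x m
  proof -
    obtain a where a: "a \<in> Aset alo" and e: "V x m = H u c \<beta> \<delta> x a m V" using V_bellman by blast
    have aG: "a \<in> Gcorr u c \<beta> \<delta> alo V x m" using V_bellman[of x m] a e by (auto simp: Gcorr_def)
    have "b = a" if b: "b \<in> Gcorr u c \<beta> \<delta> alo V x m" for b
    proof (rule ccontr)
      assume ne: "b \<noteq> a"
      have bA: "b \<in> Aset alo" and hb: "H u c \<beta> \<delta> x a m V \<le> H u c \<beta> \<delta> x b m V" using b a by (auto simp: Gcorr_def)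
      have ha: "H u c \<beta> \<delta> x b m V \<le> H u c \<beta> \<delta> x a m V" using aG bA by (auto simp: Gcorr_def)
      have mid: "(1 - 1/2) * a + (1/2) * b \<in> Aset alo" using a bA by (auto simp: Aset_def)
      have "H u c \<beta> \<delta> x ((1 - 1/2) * a + (1/2) * b) m V > (1 - 1/2) * H u c \<beta> \<delta> x a m V + (1/2) * H u c \<beta> \<delta> x b m V"
      proof -
        have "\<forall>t. 0 < t \<and> t < 1 \<longrightarrow> (1 - t) * H u c \<beta> \<delta> x a m V + t * H u c \<beta> \<delta> x b m V
                 < H u c \<beta> \<delta> x ((1 - t) * a + t * b) m V"
          using conc[of x m] a bA ne unfolding strictly_concave_on_def by metis
        from spec[OF this, of "1/2"] show ?thesis by simp
      qed
      moreover have "H u c \<beta> \<delta> x ((1 - 1/2) * a + (1/2) * b) m V \<le> H u c \<beta> \<delta> x a m V"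
        using aG mid by (auto simp: Gcorr_def)
      ultimately show False using ha hb by simp
    qed
    then show ?thesis using aG by blast
  qed
  have "\<exists>!g. \<forall>x m. g x m \<in> Gcorr u c \<beta> \<delta> alo V x m"
  proof -
    obtain g where g: "\<And>x m. Gcorr u c \<beta> \<delta> alo V x m = {g x m}" using single by metis
    show ?thesis
    proof (rule ex1I[of _ g])
      show "\<forall>x m. g x m \<in> Gcorr u c \<beta> \<delta> alo V x m" using g by simp
      fix h assume "\<forall>x m. h x m \<in> Gcorr u c \<beta> \<delta> alo V x m"
      then show "h = g" using g by (auto intro!: ext)
    qed
  qed
  then show ?thesis using conc single by blast
qed

end
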